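(* Let $X$ be a $T_1$ space and $T\subset X$ such that (a) for every $x\in X-T$ there is a clopen subset $W$ of $X$ with $x\in W$ and $W\cap T=\emptyset$, and (b) $X-T$ is totally disconnected. Let $\mathcal{C}\subset\mathcal{K}(X)$ be connected. Then for all $Y_1,Y_2\in\mathcal{C}$, $Y_1-T=Y_2-T$.
   Context: $\mathcal{K}(X)$ is the set of nonempty compact subsets of $X$ with the Vietoris topology (generated by $U^+=\{A: A\subset U\}$ and $U^-=\{A: A\cap U\neq\emptyset\}$ for $U$ open in $X$). A space is totally disconnected if any two distinct points can be separated by a clopen set containing one but not the other. *)

theory Defs
  imports "HOL-Analysis.Analysis"
begin

definition compact_sets :: "'a topology \<Rightarrow> 'a set set" where
  "compact_sets X = {K. K \<subseteq> topspace X \<and> compactin X K \<and> K \<noteq> {}}"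

definition vietoris :: "'a topology \<Rightarrow> 'a set topology" where
  "vietoris X = topology_generated_by
     ({{A \<in> compact_sets X. A \<subseteq> U} | U. openin X U} \<union>
      {{A \<in> compact_sets X. A \<inter> U \<noteq> {}} | U. openin X U})"

definition totally_disconnected_space :: "'a topology \<Rightarrow> bool" where
  "totally_disconnected_space X \<longleftrightarrow>
     (\<forall>x\<in>topspace X. \<forall>y\<in>topspace X. x \<noteq> y \<longrightarrow>
        (\<exists>C. openin X C \<and> closedin X C \<and> x \<in> C \<and> y \<notin> C))"

end

theory Submission
  imports Defs
begin

lemma clopen_finite_inter:
  assumes "finite G" "\<forall>V\<in>G. openin X V \<and> closedin X V"
  shows "openin X (topspace X \<inter> \<Inter>G) \<and> closedin X (topspace X \<inter> \<Inter>G)"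
  using assms
proof (induction G rule: finite_induct)
  case empty
  then show ?case by simp
next
  case (insert V G)
  have e: "topspace X \<inter> \<Inter>(insert V G) = V \<inter> (topspace X \<inter> \<Inter>G)"
    using insert.prems openin_subset by blast
  show ?case unfolding e using insert by (auto intro: openin_Int closedin_Int)
qed

lemma sep_point:
  assumes "T \<subseteq> topspace X"
    and a: "\<forall>x \<in> topspace X - T. \<exists>W. openin X W \<and> closedin X W \<and> x \<in> W \<and> W \<inter> T = {}"
    and td: "totally_disconnected_space (subtopology X (topspace X - T))"
    and x: "x \<in> topspace X - T" and y: "y \<in> topspace X" "y \<noteq> x"
  shows "\<exists>V. openin X V \<and> closedin X V \<and> x \<in> V \<and> y \<notin> V"
proof -
  obtain W where W: "openin X W" "closedin X W" "x \<in> W" "W \<inter> T = {}" using a x by blast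
  show ?thesis
  proof (cases "y \<in> T")
    case True
    then show ?thesis using W by blast
  next
    case False
    have xs': "x \<in> topspace (subtopology X (topspace X - T))" using x by simp
    have ys': "y \<in> topspace (subtopology X (topspace X - T))" using y False by simp
    obtain C where C: "openin (subtopology X (topspace X - T)) C"
      "closedin (subtopology X (topspace X - T)) C" "x \<in> C" "y \<notin> C"
      using td[unfolded totally_disconnected_space_def, rule_format, OF xs' ys' y(2)[symmetric]] by blast
    obtain U where U: "openin X U" "C = U \<inter> (topspace X - T)" using C(1) unfolding openin_subtopology by auto
    obtain K where K: "closedin X K" "C = K \<inter> (topspace X - T)" using C(2) unfolding closedin_subtopology by auto
    have WT: "W \<subseteq> topspace X - T" using W(1,4) openin_subset by auto
    have e1: "C \<inter> W = U \<inter> W" using U(2) WT by auto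
    have e2: "C \<inter> W = K \<inter> W" using K(2) WT by auto
    have "openin X (C \<inter> W)" unfolding e1 using U(1) W(1) by (rule openin_Int)
    moreover have "closedin X (C \<inter> W)" unfolding e2 using K(1) W(2) by (rule closedin_Int)
    moreover have "x \<in> C \<inter> W" "y \<notin> C \<inter> W" using C W by auto
    ultimately show ?thesis by blast
  qed
qed

lemma main_sub:
  assumes "T \<subseteq> topspace X"
    and a: "\<forall>x \<in> topspace X - T. \<exists>W. openin X W \<and> closedin X W \<and> x \<in> W \<and> W \<inter> T = {}"
    and td: "totally_disconnected_space (subtopology X (topspace X - T))"
    and CC: "\<C> \<subseteq> compact_sets X"
    and con: "connectedin (vietoris X) \<C>"
    and Y1: "Y1 \<in> \<C>" and Y2: "Y2 \<in> \<C>"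
  shows "Y1 - T \<subseteq> Y2"
proof
  fix x assume xY: "x \<in> Y1 - T"
  show "x \<in> Y2"
  proof (rule ccontr)
    assume nx: "x \<notin> Y2"
    have Y1s: "Y1 \<subseteq> topspace X" and Y2c: "compactin X Y2"
      using CC Y1 Y2 unfolding compact_sets_def by auto
    then have xs: "x \<in> topspace X - T" using xY by auto
    define P where "P = {V. openin X V \<and> closedin X V \<and> x \<in> V}"
    define \<U> where "\<U> = (\<lambda>V. topspace X - V) ` P"
    have "\<forall>u\<in>\<U>. openin X u" unfolding \<U>_def P_def
      using openin_diff[OF openin_topspace] by blast
    moreover have "Y2 \<subseteq> \<Union>\<U>"
    proof
      fix y assume yY: "y \<in> Y2"
      then have yt: "y \<in> topspace X" using Y2c compactin_subset_topspace by blast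
      have "y \<noteq> x" using nx yY by auto
      then obtain V where "openin X V" "closedin X V" "x \<in> V" "y \<notin> V"
        using sep_point[OF assms(1) a td xs yt] by blast
      then have "V \<in> P" "y \<in> topspace X - V" unfolding P_def using yt by auto
      then show "y \<in> \<Union>\<U>" unfolding \<U>_def by blast
    qed
    ultimately obtain F where F: "finite F" "F \<subseteq> \<U>" "Y2 \<subseteq> \<Union>F"
      using Y2c unfolding compactin_def by meson
    from finite_subset_image[OF F(1) F(2)[unfolded \<U>_def]]
    obtain G where G0: "G \<subseteq> P" "finite G" "F = (\<lambda>V. topspace X - V) ` G"
      by blast
    have G: "G \<subseteq> {V. openin X V \<and> closedin X V \<and> x \<in> V}" "finite G"
      "F = (\<lambda>V. topspace X - V) ` G" using G0 unfolding P_def by auto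
    define W where "W = topspace X \<inter> \<Inter>G"
    have Wc: "openin X W" "closedin X W" unfolding W_def
      using clopen_finite_inter[OF G(2)] G(1) by auto
    have xW: "x \<in> W" unfolding W_def using G(1) xs by auto
    have WY2: "W \<inter> Y2 = {}"
    proof (rule equals0I)
      fix y assume "y \<in> W \<inter> Y2"
      then obtain f where "f \<in> F" "y \<in> f" "y \<in> W" using F(3) by blast
      then obtain V where "V \<in> G" "y \<notin> V" using G(3) by auto
      then show False using \<open>y \<in> W\<close> unfolding W_def by auto
    qed
    define E1 where "E1 = {A \<in> compact_sets X. A \<inter> W \<noteq> {}}"
    define E2 where "E2 = {A \<in> compact_sets X. A \<subseteq> topspace X - W}"
    have "{A \<in> compact_sets X. A \<inter> W \<noteq> {}} \<in> {{A \<in> compact_sets X. A \<inter> U \<noteq> {}} | U. openin X U}"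
      using Wc(1) by blast
    then have o1: "openin (vietoris X) E1" unfolding vietoris_def E1_def
      by (intro topology_generated_by_Basis UnI2)
    have "openin X (topspace X - W)" using Wc(2) by (simp add: openin_diff)
    then have "{A \<in> compact_sets X. A \<subseteq> topspace X - W} \<in> {{A \<in> compact_sets X. A \<subseteq> U} | U. openin X U}"
      by blast
    then have o2: "openin (vietoris X) E2" unfolding vietoris_def E2_def
      by (intro topology_generated_by_Basis UnI1)
    have cov: "\<C> \<subseteq> E1 \<union> E2"
    proof
      fix A assume "A \<in> \<C>"
      then have "A \<in> compact_sets X" "A \<subseteq> topspace X" using CC unfolding compact_sets_def by auto
      then show "A \<in> E1 \<union> E2" unfolding E1_def E2_def by auto
    qed
    have dis: "E1 \<inter> E2 \<inter> \<C> = {}" unfolding E1_def E2_def by auto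
    have "Y1 \<in> E1" using Y1 CC xY xW unfolding E1_def by auto
    then have n1: "E1 \<inter> \<C> \<noteq> {}" using Y1 by auto
    have "Y2 \<subseteq> topspace X" using Y2 CC unfolding compact_sets_def by auto
    then have "Y2 \<in> E2" using Y2 CC WY2 unfolding E2_def by auto
    then have n2: "E2 \<inter> \<C> \<noteq> {}" using Y2 by auto
    have ne: "\<not> (\<exists>E1 E2. openin (vietoris X) E1 \<and> openin (vietoris X) E2 \<and>
             \<C> \<subseteq> E1 \<union> E2 \<and> E1 \<inter> E2 \<inter> \<C> = {} \<and> E1 \<inter> \<C> \<noteq> {} \<and> E2 \<inter> \<C> \<noteq> {})"
      using con unfolding connectedin by simp
    show False using ne o1 o2 cov dis n1 n2 by blast
  qed
qed

theorem lemma5p3: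
  fixes X :: "'a topology" and T :: "'a set" and \<C> :: "'a set set"
  assumes "t1_space X"
    and "T \<subseteq> topspace X"
    and "\<forall>x \<in> topspace X - T. \<exists>W. openin X W \<and> closedin X W \<and> x \<in> W \<and> W \<inter> T = {}"
    and "totally_disconnected_space (subtopology X (topspace X - T))"
    and "\<C> \<subseteq> compact_sets X"
    and "connectedin (vietoris X) \<C>"
  shows "\<forall>Y1\<in>\<C>. \<forall>Y2\<in>\<C>. Y1 - T = Y2 - T"
proof (intro ballI)
  fix Y1 Y2 assume "Y1 \<in> \<C>" "Y2 \<in> \<C>"
  then have "Y1 - T \<subseteq> Y2" "Y2 - T \<subseteq> Y1"
    using main_sub[OF assms(2-6)] by auto
  then show "Y1 - T = Y2 - T" by blast
qed

end
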